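(* Let $p$ be a positive stochastic choice function on a finite set $X$ such that (a) there exist $a,b,c\in X$ with $a\not\simeq_p b$, $b\not\simeq_p c$, $a\not\simeq_p c$, and (b) for every $x\in X$ there exist $y,z\in X$ with $x\bowtie_p y$, $y\bowtie_p z$ and $x\bowtie_p z$. If $p$ satisfies Generalized Independence of Symmetric Alternatives and Consistency of Revealed Similarities, then $p$ is a 3-step Nested Stochastic Choice.
   Context: $\mathscr{A}$ is the collection of nonempty subsets of $X$; $p(x,A)=0$ for $x\notin A$, $\sum_{a\in A}p(a,A)=1$, $p(a,A)>0$ for $a\in A$; $A\cup x=A\cup\{x\}$. $a\sim_p b$ means $\frac{p(a,A)}{p(b,A)}=\frac{p(a,\{a,b\})}{p(b,\{a,b\})}$ for all $A\ni a,b$. Approximate revealed similarity: $a\bowtie_p b$ iff $a\not\sim_p b$ and $\frac{p(a,A)}{p(b,A)}=\frac{p(a,A\cup x)}{p(b,A\cup x)}$ for every $A\in\mathscr{A}$ (containing $a,b$) and every $x\notin A$ with $x\not\sim_p a$ and $x\not\sim_p b$. Write $a\simeq_p b$ iff $a\sim_p b$ or $a\bowtie_p b$. Generalized Independence of Symmetric Alternatives: for any $A\in\mathscr{A}$, $a,b\in A$, $x\notin A$, if ($a\sim_p x$ and $b\sim_p x$) or ($a\bowtie_p x$ and $b\bowtie_p x$) or ($a\not\simeq_p x$ and $b\not\simeq_p x$), then $\frac{p(a,A)}{p(b,A)}=\frac{p(a,A\cup x)}{p(b,A\cup x)}$. Consistency of Revealed Similarities: for any $x,y,x'\in X$ with $x\sim_p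 x'$: $x\bowtie_p y$ iff $x'\bowtie_p y$. 3-step NSC: there exist a partition $X_1,\dots,X_K$ of $X$, for each $k$ a partition $X_k^1,\dots,X_k^{q_k}$ of $X_k$, and functions $u:X\to\mathbb{R}_{++}$, $w:\bigcup_{i}2^{X_i}\to\mathbb{R}_+$, $v:\bigcup_k\bigcup_l 2^{X_k^l}\to\mathbb{R}_+$ with $w(\emptyset)=v(\emptyset)=0$, such that for every $A\in\mathscr{A}$ and $x\in A\cap X_k^j$, $p(x,A)=\frac{u(x)}{\sum_{y\in A\cap X_k^j}u(y)}\cdot\frac{v(A\cap X_k^j)}{\sum_{l=1}^{q_k}v(A\cap X_k^l)}\cdot\frac{w(A\cap X_k)}{\sum_{i=1}^K w(A\cap X_i)}$. *)

theory Defs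
  imports Complex_Main "HOL-Library.Disjoint_Sets"
begin

text \<open>A stochastic choice function on the finite ground set X; menus are the nonempty
subsets of X. Values of p outside of menus are irrelevant.\<close>

definition positive_scf :: "'a set \<Rightarrow> ('a \<Rightarrow> 'a set \<Rightarrow> real) \<Rightarrow> bool" where
  "positive_scf X p \<longleftrightarrow>
     (\<forall>A. A \<subseteq> X \<and> A \<noteq> {} \<longrightarrow>
        (\<forall>x. x \<notin> A \<longrightarrow> p x A = 0) \<and>
        (\<Sum>a\<in>A. p a A) = 1 \<and>
        (\<forall>a\<in>A. p a A > 0))"

definition rsim :: "'a set \<Rightarrow> ('a \<Rightarrow> 'a set \<Rightarrow> real) \<Rightarrow> 'a \<Rightarrow> 'a \<Rightarrow> bool" where
  "rsim X p a b \<longleftrightarrow>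
     (\<forall>A. A \<subseteq> X \<and> a \<in> A \<and> b \<in> A \<longrightarrow> p a A / p b A = p a {a, b} / p b {a, b})"

definition rbowtie :: "'a set \<Rightarrow> ('a \<Rightarrow> 'a set \<Rightarrow> real) \<Rightarrow> 'a \<Rightarrow> 'a \<Rightarrow> bool" where
  "rbowtie X p a b \<longleftrightarrow> \<not> rsim X p a b \<and>
     (\<forall>A x. A \<subseteq> X \<and> a \<in> A \<and> b \<in> A \<and> x \<in> X \<and> x \<notin> A \<and>
        \<not> rsim X p x a \<and> \<not> rsim X p x b \<longrightarrow>
        p a A / p b A = p a (insert x A) / p b (insert x A))"

definition rsimeq :: "'a set \<Rightarrow> ('a \<Rightarrow> 'a set \<Rightarrow> real) \<Rightarrow> 'a \<Rightarrow> 'a \<Rightarrow> bool" where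
  "rsimeq X p a b \<longleftrightarrow> rsim X p a b \<or> rbowtie X p a b"

definition GISA :: "'a set \<Rightarrow> ('a \<Rightarrow> 'a set \<Rightarrow> real) \<Rightarrow> bool" where
  "GISA X p \<longleftrightarrow>
     (\<forall>A a b x. A \<subseteq> X \<and> A \<noteq> {} \<and> a \<in> A \<and> b \<in> A \<and> x \<in> X \<and> x \<notin> A \<and>
        ((rsim X p a x \<and> rsim X p b x) \<or> (rbowtie X p a x \<and> rbowtie X p b x) \<or>
         (\<not> rsimeq X p a x \<and> \<not> rsimeq X p b x)) \<longrightarrow>
        p a A / p b A = p a (insert x A) / p b (insert x A))"

definition CRS :: "'a set \<Rightarrow> ('a \<Rightarrow> 'a set \<Rightarrow> real) \<Rightarrow> bool" where
  "CRS X p \<longleftrightarrow>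
     (\<forall>x\<in>X. \<forall>y\<in>X. \<forall>x'\<in>X. rsim X p x x' \<longrightarrow> (rbowtie X p x y \<longleftrightarrow> rbowtie X p x' y))"

text \<open>3-step nested stochastic choice. The partition X_1..X_K is a set of blocks P,
and for each block B the partition X_k^1..X_k^{q_k} is the set of blocks Q B.\<close>
definition NSC3 :: "'a set \<Rightarrow> ('a \<Rightarrow> 'a set \<Rightarrow> real) \<Rightarrow> bool" where
  "NSC3 X p \<longleftrightarrow>
     (\<exists>(P :: 'a set set) (Q :: 'a set \<Rightarrow> 'a set set) (u :: 'a \<Rightarrow> real)
        (w :: 'a set \<Rightarrow> real) (v :: 'a set \<Rightarrow> real).
        partition_on X P \<and>
        (\<forall>B\<in>P. partition_on B (Q B)) \<and>
        (\<forall>x\<in>X. u x > 0) \<and>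
        (\<forall>B\<in>P. \<forall>S. S \<subseteq> B \<longrightarrow> w S \<ge> 0) \<and> w {} = 0 \<and>
        (\<forall>B\<in>P. \<forall>C\<in>Q B. \<forall>S. S \<subseteq> C \<longrightarrow> v S \<ge> 0) \<and> v {} = 0 \<and>
        (\<forall>A. A \<subseteq> X \<and> A \<noteq> {} \<longrightarrow>
          (\<forall>B\<in>P. \<forall>C\<in>Q B. \<forall>x\<in>A \<inter> C.
             p x A = u x / (\<Sum>y\<in>A \<inter> C. u y)
                   * (v (A \<inter> C) / (\<Sum>C'\<in>Q B. v (A \<inter> C')))
                   * (w (A \<inter> B) / (\<Sum>B'\<in>P. w (A \<inter> B'))))))"

end

theory Submission
  imports Defs
begin

locale ctx =
  fixes X :: "'a set" and p :: "'a \<Rightarrow> 'a set \<Rightarrow> real"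
  assumes finX: "finite X" and pos: "positive_scf X p"
    and gisa: "GISA X p" and crs: "CRS X p"
begin

abbreviation "sm \<equiv> rsim X p"
abbreviation "bt \<equiv> rbowtie X p"
abbreviation "eqv \<equiv> rsimeq X p"

lemma ppos: "A \<subseteq> X \<Longrightarrow> a \<in> A \<Longrightarrow> p a A > 0"
  using pos unfolding positive_scf_def by blast
lemma psum: "A \<subseteq> X \<Longrightarrow> A \<noteq> {} \<Longrightarrow> (\<Sum>a\<in>A. p a A) = 1"
  using pos unfolding positive_scf_def by blast

lemma sm_refl: "a \<in> X \<Longrightarrow> sm a a"
  unfolding rsim_def
proof (intro allI impI)
  fix A assume "a \<in> X" "A \<subseteq> X \<and> a \<in> A \<and> a \<in> A"
  then have "p a A > 0" "p a {a} > 0" using ppos[of A a] ppos[of "{a}" a] by auto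
  then show "p a A / p a A = p a {a, a} / p a {a, a}" by simp
qed

lemma sm_sym: assumes "sm a b" shows "sm b a"
  unfolding rsim_def
proof (intro allI impI)
  fix A assume A: "A \<subseteq> X \<and> b \<in> A \<and> a \<in> A"
  have "p a A / p b A = p a {a, b} / p b {a, b}" using assms A unfolding rsim_def by blast
  then have "inverse (p a A / p b A) = inverse (p a {a, b} / p b {a, b})" by simp
  then show "p b A / p a A = p b {b, a} / p a {b, a}" by (simp add: insert_commute)
qed

lemma bt_sym: assumes "bt a b" shows "bt b a"
  unfolding rbowtie_def
proof (intro conjI allI impI)
  show "\<not> sm b a" using assms sm_sym unfolding rbowtie_def by blast
  fix A x assume A: "A \<subseteq> X \<and> b \<in> A \<and> a \<in> A \<and> x \<in> X \<and> x \<notin> A \<and> \<not> sm x b \<and> \<not> sm x a"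
  have "p a A / p b A = p a (insert x A) / p b (insert x A)" using assms A unfolding rbowtie_def by blast
  then have "inverse (p a A / p b A) = inverse (p a (insert x A) / p b (insert x A))" by simp
  then show "p b A / p a A = p b (insert x A) / p a (insert x A)" by simp
qed

lemma bt_not_sm: "bt a b \<Longrightarrow> \<not> sm a b"
  unfolding rbowtie_def by blast

lemma eqv_sym: "eqv a b \<Longrightarrow> eqv b a"
  unfolding rsimeq_def using sm_sym bt_sym by blast

lemma eqv_refl: "a \<in> X \<Longrightarrow> eqv a a"
  unfolding rsimeq_def using sm_refl by blast

lemma gisaI: "A \<subseteq> X \<Longrightarrow> a \<in> A \<Longrightarrow> b \<in> A \<Longrightarrow> x \<in> X \<Longrightarrow> x \<notin> A \<Longrightarrow>
  (sm a x \<and> sm b x) \<or> (bt a x \<and> bt b x) \<or> (\<not> eqv a x \<and> \<not> eqv b x) \<Longrightarrow>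
  p a A / p b A = p a (insert x A) / p b (insert x A)"
  using gisa unfolding GISA_def by blast

lemma ratio_mult: "A \<subseteq> X \<Longrightarrow> a \<in> A \<Longrightarrow> b \<in> A \<Longrightarrow> c \<in> A \<Longrightarrow> p a A / p c A = (p a A / p b A) * (p b A / p c A)"
  using ppos[of A b] by (simp add: field_simps)

lemma sm_trans: assumes "sm a b" "sm b c" "a \<in> X" "b \<in> X" "c \<in> X" shows "sm a c"
proof -
  have key: "p a A / p c A = (p a {a,b} / p b {a,b}) * (p b {b,c} / p c {b,c})"
    if "A \<subseteq> X" "a \<in> A" "c \<in> A" for A
  proof (cases "b \<in> A")
    case True
    then show ?thesis using ratio_mult[of A a b c] that assms(1,2) unfolding rsim_def by simp
  next
    case False
    have "insert b A \<subseteq> X" using that assms by auto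
    then have "p a (insert b A) / p c (insert b A) = (p a {a,b} / p b {a,b}) * (p b {b,c} / p c {b,c})"
      using ratio_mult[of "insert b A" a b c] that assms(1,2) unfolding rsim_def by simp
    moreover have "p a A / p c A = p a (insert b A) / p c (insert b A)"
      using gisaI[of A a c b] that assms False sm_sym by blast
    ultimately show ?thesis by simp
  qed
  show ?thesis unfolding rsim_def
  proof (intro allI impI)
    fix A assume A: "A \<subseteq> X \<and> a \<in> A \<and> c \<in> A"
    have "{a,c} \<subseteq> X" using assms by auto
    then show "p a A / p c A = p a {a, c} / p c {a, c}" using key A by simp
  qed
qed

lemma crsI: "x \<in> X \<Longrightarrow> y \<in> X \<Longrightarrow> x' \<in> X \<Longrightarrow> sm x x' \<Longrightarrow> bt x y \<Longrightarrow> bt x' y"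
  using crs unfolding CRS_def by blast

lemma bt_sm_trans: "bt a b \<Longrightarrow> sm b c \<Longrightarrow> a \<in> X \<Longrightarrow> b \<in> X \<Longrightarrow> c \<in> X \<Longrightarrow> bt a c"
  using crsI[of b a c] bt_sym by blast

lemma bt_bt_trans: assumes ab: "bt a b" and bc: "bt b c" and X: "a \<in> X" "b \<in> X" "c \<in> X"
  and nac: "\<not> sm a c" shows "bt a c"
proof -
  have K: "p a A / p c A = p a (insert x A) / p c (insert x A)"
    if A: "A \<subseteq> X" "a \<in> A" "b \<in> A" "c \<in> A" "x \<in> X" "x \<notin> A" "\<not> sm x a" "\<not> sm x c" for A x
  proof (cases "sm x b")
    case True
    then have "bt x a" "bt x c" using crsI[of b a x] crsI[of b c x] sm_sym ab bc bt_sym X A by blast+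
    then show ?thesis using gisaI[of A a c x] A bt_sym by blast
  next
    case False
    have 1: "p a A / p b A = p a (insert x A) / p b (insert x A)"
      using ab A False unfolding rbowtie_def by blast
    have 2: "p b A / p c A = p b (insert x A) / p c (insert x A)"
      using bc A False sm_sym unfolding rbowtie_def by blast
    have "insert x A \<subseteq> X" using A by auto
    then have "p a (insert x A) / p c (insert x A) = (p a (insert x A) / p b (insert x A)) * (p b (insert x A) / p c (insert x A))"
      using ratio_mult[of "insert x A" a b c] A by blast
    moreover have "p a A / p c A = (p a A / p b A) * (p b A / p c A)" using ratio_mult[of A a b c] A by blast
    ultimately show ?thesis using 1 2 by (simp only:)
  qed
  show ?thesis unfolding rbowtie_def
  proof (intro conjI allI impI)
    show "\<not> sm a c" by fact
    fix A x assume A: "A \<subseteq> X \<and> a \<in> A \<and> c \<in> A \<and> x \<in> X \<and> x \<notin> A \<and> \<not> sm x a \<and> \<not> sm x c"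
    have ba: "bt a b" "bt c b" using ab bc bt_sym by auto
    show "p a A / p c A = p a (insert x A) / p c (insert x A)"
    proof (cases "b \<in> A")
      case True then show ?thesis using K A by blast
    next
      case False
      show ?thesis
      proof (cases "x = b")
        case True
        then show ?thesis using gisaI[of A a c b] A ba X by blast
      next
        case False2: False
        have e1: "p a A / p c A = p a (insert b A) / p c (insert b A)"
          using gisaI[of A a c b] A ba X False by blast
        have e2: "p a (insert x A) / p c (insert x A) = p a (insert b (insert x A)) / p c (insert b (insert x A))"
          using gisaI[of "insert x A" a c b] A ba X False False2 by blast
        have e3: "p a (insert b A) / p c (insert b A) = p a (insert x (insert b A)) / p c (insert x (insert b A))"
          using K[of "insert b A" x] A X False2 by blast
        show ?thesis using e1 e2 e3 by (simp add: insert_commute)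
      qed
    qed
  qed
qed

lemma eqv_trans: assumes "eqv a b" "eqv b c" "a \<in> X" "b \<in> X" "c \<in> X" shows "eqv a c"
proof -
  consider "sm a b" "sm b c" | "sm a b" "bt b c" | "bt a b" "sm b c" | "bt a b" "bt b c"
    using assms unfolding rsimeq_def by blast
  then show ?thesis
  proof cases
    case 1 then show ?thesis using sm_trans assms unfolding rsimeq_def by blast
  next
    case 2 then have "bt c a" using bt_sm_trans[of c b a] bt_sym sm_sym assms by blast
    then show ?thesis using bt_sym unfolding rsimeq_def by blast
  next
    case 3 then show ?thesis using bt_sm_trans assms unfolding rsimeq_def by blast
  next
    case 4 then show ?thesis using bt_bt_trans assms unfolding rsimeq_def by blast
  qed
qed

lemma sm_eqv: "sm a b \<Longrightarrow> eqv a b" unfolding rsimeq_def by blast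
lemma eqv_not_sm: "eqv a b \<Longrightarrow> \<not> sm a b \<Longrightarrow> bt a b" unfolding rsimeq_def by blast

definition cond :: "'a \<Rightarrow> 'a \<Rightarrow> 'a \<Rightarrow> bool" where
  "cond a b x \<longleftrightarrow> (sm a x \<and> sm b x) \<or> (bt a x \<and> bt b x) \<or> (\<not> eqv a x \<and> \<not> eqv b x)"

definition Ps :: "'a set \<Rightarrow> 'a set \<Rightarrow> real" where
  "Ps A S = (\<Sum>y\<in>S. p y A)"

lemma ratio_ext:
  assumes "finite D" "T \<union> D \<subseteq> X" "T \<inter> D = {}" "\<forall>x\<in>D. \<forall>a\<in>T. \<forall>b\<in>T. cond a b x" "a \<in> T" "b \<in> T"
  shows "p a (T \<union> D) / p b (T \<union> D) = p a T / p b T"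
  using assms(1-4)
proof (induction D rule: finite_induct)
  case empty then show ?case by simp
next
  case (insert x F)
  have sub: "T \<union> F \<subseteq> X" "x \<in> X" "x \<notin> T \<union> F" "T \<inter> F = {}"
    using insert.prems insert.hyps by auto
  have c: "cond a b x" using insert.prems(3) assms(5,6) by blast
  have "p a (T \<union> F) / p b (T \<union> F) = p a (insert x (T \<union> F)) / p b (insert x (T \<union> F))"
    using gisaI[of "T \<union> F" a b x] sub c assms(5,6) unfolding cond_def by blast
  moreover have "p a (T \<union> F) / p b (T \<union> F) = p a T / p b T"
    using insert.IH sub insert.prems(3) by blast
  ultimately show ?case by simp
qed

lemma Ps_pos: "S \<noteq> {} \<Longrightarrow> S \<subseteq> A \<Longrightarrow> A \<subseteq> X \<Longrightarrow> Ps A S > 0"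
proof -
  assume a: "S \<noteq> {}" "S \<subseteq> A" "A \<subseteq> X"
  then have "S \<subseteq> X" by blast
  then have "finite S" by (rule finite_subset[OF _ finX])
  moreover have "\<forall>y\<in>S. p y A > 0" using ppos a by blast
  ultimately show ?thesis unfolding Ps_def using a(1) by (simp add: sum_pos)
qed

lemma share:
  assumes "T \<subseteq> A" "A \<subseteq> X" "T \<noteq> {}" "\<forall>x\<in>A - T. \<forall>a\<in>T. \<forall>b\<in>T. cond a b x" "a \<in> T"
  shows "p a A = Ps A T * p a T"
proof -
  obtain b where b: "b \<in> T" using assms by blast
  define k where "k = p b A / p b T"
  have AD: "A = T \<union> (A - T)" using assms by auto
  have "A - T \<subseteq> X" using assms by blast
  then have fin: "finite (A - T)" by (rule finite_subset[OF _ finX])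
  have T: "T \<subseteq> X" using assms by auto
  have eq: "p y A = p y T * k" if "y \<in> T" for y
  proof -
    have "T \<union> (A - T) \<subseteq> X" "T \<inter> (A - T) = {}" using assms by auto
    then have "p y (T \<union> (A - T)) / p b (T \<union> (A - T)) = p y T / p b T"
      using ratio_ext[of "A - T" T y b] fin assms(4) that b by blast
    then have "p y A / p b A = p y T / p b T" using AD[symmetric] by simp
    moreover have "p b A > 0" "p b T > 0" using ppos assms b T by auto
    ultimately show ?thesis unfolding k_def by (simp add: field_simps)
  qed
  have "Ps A T = (\<Sum>y\<in>T. p y T * k)" unfolding Ps_def using eq by simp
  also have "\<dots> = k" using psum[OF T assms(3)] by (simp add: sum_distrib_right[symmetric])
  finally have "Ps A T = k" .
  moreover have "p a A = p a T * k" using eq assms(5) by blast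
  ultimately show ?thesis by (simp add: algebra_simps)
qed

lemma share_sum:
  assumes "T \<subseteq> A" "A \<subseteq> X" "T \<noteq> {}" "\<forall>x\<in>A - T. \<forall>a\<in>T. \<forall>b\<in>T. cond a b x" "S \<subseteq> T"
  shows "Ps A S = Ps A T * Ps T S"
proof -
  have "\<And>y. y \<in> S \<Longrightarrow> p y A = Ps A T * p y T" using share[OF assms(1-4)] assms(5) by blast
  then have "(\<Sum>y\<in>S. p y A) = (\<Sum>y\<in>S. Ps A T * p y T)" by (rule sum.cong[OF refl])
  then show ?thesis unfolding Ps_def[of A S] Ps_def[of T S] sum_distrib_left .
qed

definition G :: "'a set \<Rightarrow> 'a set \<Rightarrow> real" where
  "G S S' = Ps (S \<union> S') S / Ps (S \<union> S') S'"

lemma G_eq: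
  assumes "S \<union> S' \<subseteq> M" "M \<subseteq> X" "S \<noteq> {}" "S' \<noteq> {}"
    "\<forall>x\<in>M - (S \<union> S'). \<forall>a\<in>S \<union> S'. \<forall>b\<in>S \<union> S'. cond a b x"
  shows "G S S' = Ps M S / Ps M S'"
proof -
  have ne: "S \<union> S' \<noteq> {}" using assms(3) by blast
  have 1: "Ps M S = Ps M (S \<union> S') * Ps (S \<union> S') S" using share_sum[OF assms(1,2) ne assms(5)] by blast
  have 2: "Ps M S' = Ps M (S \<union> S') * Ps (S \<union> S') S'" using share_sum[OF assms(1,2) ne assms(5)] by blast
  have "Ps M (S \<union> S') > 0" using Ps_pos[OF ne assms(1,2)] .
  then show ?thesis unfolding G_def 1 2 by simp
qed

lemma G_pos: "S \<noteq> {} \<Longrightarrow> S' \<noteq> {} \<Longrightarrow> S \<union> S' \<subseteq> X \<Longrightarrow> G S S' > 0"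
proof -
  assume a: "S \<noteq> {}" "S' \<noteq> {}" "S \<union> S' \<subseteq> X"
  have "Ps (S \<union> S') S > 0" by (rule Ps_pos) (use a in auto)
  moreover have "Ps (S \<union> S') S' > 0" by (rule Ps_pos) (use a in auto)
  ultimately show ?thesis unfolding G_def by simp
qed

end


lemma ref_lemma:
  fixes F :: "'b \<Rightarrow> 'b \<Rightarrow> real" and g :: "'b \<Rightarrow> 'c"
  assumes coc: "\<And>S S' S''. S \<in> D \<Longrightarrow> S' \<in> D \<Longrightarrow> S'' \<in> D \<Longrightarrow> g S \<noteq> g S' \<Longrightarrow> g S' \<noteq> g S'' \<Longrightarrow> g S \<noteq> g S''
      \<Longrightarrow> F S S' * F S' S'' = F S S''"
    and sym: "\<And>S S'. S \<in> D \<Longrightarrow> S' \<in> D \<Longrightarrow> g S \<noteq> g S' \<Longrightarrow> F S S' * F S' S = 1"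
    and R: "R1 \<in> D" "R2 \<in> D" "R3 \<in> D" "g R1 \<noteq> g R2" "g R2 \<noteq> g R3" "g R1 \<noteq> g R3"
    and S: "S \<in> D" "S' \<in> D" "g S \<noteq> g S'"
  shows "(if g S \<noteq> g R1 then F S R1 else F S R2 * F R2 R1)
       = F S S' * (if g S' \<noteq> g R1 then F S' R1 else F S' R2 * F R2 R1)"
proof (cases "g S = g R1")
  case True
  then have S'1: "g S' \<noteq> g R1" using S by simp
  show ?thesis
  proof (cases "g S' = g R2")
    case False
    have a: "F S R2 = F S S' * F S' R2" using coc[of S S' R2] S R True False by simp
    have b: "F S' R2 * F R2 R1 = F S' R1" using coc[of S' R2 R1] S R True False S'1 by simp
    show ?thesis using True S'1 a b by (simp add: mult.assoc)
  next
    case T2: True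
    have a: "F S R3 * F R3 R2 = F S R2" using coc[of S R3 R2] S R True by simp
    have b: "F R2 R3 * F R3 R1 = F R2 R1" using coc[of R2 R3 R1] R by simp
    have c: "F R3 R2 * F R2 R3 = 1" using sym[of R3 R2] R by simp
    have d: "F S R3 * F R3 S' = F S S'" using coc[of S R3 S'] S R True T2 by simp
    have e: "F R3 S' * F S' R1 = F R3 R1" using coc[of R3 S' R1] S R True T2 by simp
    have "F S R2 * F R2 R1 = F S R3 * (F R3 R2 * F R2 R3) * F R3 R1"
      by (simp only: a[symmetric] b[symmetric] mult.assoc)
    also have "\<dots> = F S R3 * F R3 R1" using c by simp
    also have "\<dots> = F S S' * (F S' R1)" by (simp only: d[symmetric] e[symmetric] mult.assoc)
    finally show ?thesis using True S'1 by simp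
  qed
next
  case False
  note S1 = False
  show ?thesis
  proof (cases "g S' = g R1")
    case False
    then show ?thesis using S1 coc[of S S' R1] S R by simp
  next
    case T1: True
    show ?thesis
    proof (cases "g S = g R2")
      case False
      have a: "F S S' * F S' R2 = F S R2" using coc[of S S' R2] S R T1 False by simp
      have b: "F S R2 * F R2 R1 = F S R1" using coc[of S R2 R1] S R S1 False by simp
      show ?thesis using S1 T1 a b by (simp add: mult.assoc[symmetric])
    next
      case T2: True
      have a: "F S' R3 * F R3 R2 = F S' R2" using coc[of S' R3 R2] S R T1 by simp
      have b: "F R2 R3 * F R3 R1 = F R2 R1" using coc[of R2 R3 R1] R by simp
      have c: "F R3 R2 * F R2 R3 = 1" using sym[of R3 R2] R by simp
      have d: "F S S' * F S' R3 = F S R3" using coc[of S S' R3] S R T1 T2 by simp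
      have e: "F S R3 * F R3 R1 = F S R1" using coc[of S R3 R1] S R T1 T2 by simp
      have "F S S' * (F S' R2 * F R2 R1) = F S S' * F S' R3 * (F R3 R2 * F R2 R3) * F R3 R1"
        by (simp only: a[symmetric] b[symmetric] mult.assoc)
      also have "\<dots> = F S R1" using c d e by simp
      finally show ?thesis using S1 T1 by simp
    qed
  qed
qed

lemma luce:
  fixes Pr h :: "'i \<Rightarrow> real"
  assumes "finite I" "i0 \<in> I" "Pr i0 > 0" "h i0 > 0" "\<forall>j\<in>I. Pr j * h i0 = Pr i0 * h j" "sum Pr I = 1"
  shows "Pr i0 = h i0 / sum h I"
proof -
  have "sum h I * Pr i0 = (\<Sum>j\<in>I. Pr j * h i0)"
    unfolding sum_distrib_right using assms(5) by (intro sum.cong refl) (simp add: mult.commute)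
  also have "\<dots> = h i0" using assms(6) by (simp add: sum_distrib_right[symmetric])
  finally have e: "sum h I * Pr i0 = h i0" .
  then have "sum h I \<noteq> 0" using assms(4) by auto
  then show ?thesis using e by (simp add: field_simps)
qed

lemma part_sum:
  fixes f :: "'a \<Rightarrow> real"
  assumes "finite A" "finite P" "\<forall>y\<in>A. \<exists>!B. B \<in> P \<and> y \<in> B"
  shows "(\<Sum>B\<in>P. \<Sum>y\<in>A \<inter> B. f y) = (\<Sum>y\<in>A. f y)"
proof -
  have "(\<Sum>B\<in>P. \<Sum>y\<in>A \<inter> B. f y) = (\<Sum>B\<in>P. \<Sum>y\<in>A. if y \<in> B then f y else 0)"
  proof (rule sum.cong[OF refl])
    fix B assume "B \<in> P" show "(\<Sum>y\<in>A \<inter> B. f y) = (\<Sum>y\<in>A. if y \<in> B then f y else 0)"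
      by (rule sum.inter_restrict[OF assms(1)])
  qed
  also have "\<dots> = (\<Sum>y\<in>A. \<Sum>B\<in>P. if y \<in> B then f y else 0)" by (rule sum.swap)
  also have "\<dots> = (\<Sum>y\<in>A. f y)"
  proof (rule sum.cong[OF refl])
    fix y assume y: "y \<in> A"
    then obtain B0 where B0: "B0 \<in> P" "y \<in> B0" "\<And>B. B \<in> P \<Longrightarrow> y \<in> B \<Longrightarrow> B = B0" using assms(3) by blast
    have "(\<Sum>B\<in>P. if y \<in> B then f y else 0) = (\<Sum>B\<in>P. if B = B0 then f y else 0)"
    proof (rule sum.cong[OF refl])
      fix B assume "B \<in> P"
      then have "y \<in> B \<longleftrightarrow> B = B0" using B0 by blast
      then show "(if y \<in> B then f y else 0) = (if B = B0 then f y else 0)" by simp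
    qed
    also have "\<dots> = f y" using B0(1) assms(2) by simp
    finally show "(\<Sum>B\<in>P. if y \<in> B then f y else 0) = f y" .
  qed
  finally show ?thesis .
qed



context ctx begin

definition blk :: "'a \<Rightarrow> 'a set" where "blk x = {y\<in>X. eqv x y}"
definition nst :: "'a \<Rightarrow> 'a set" where "nst x = {y\<in>X. sm x y}"

lemma blk_self: "x \<in> X \<Longrightarrow> x \<in> blk x" unfolding blk_def using eqv_refl by blast
lemma nst_self: "x \<in> X \<Longrightarrow> x \<in> nst x" unfolding nst_def using sm_refl by blast
lemma blk_X: "blk x \<subseteq> X" unfolding blk_def by blast
lemma nst_X: "nst x \<subseteq> X" unfolding nst_def by blast
lemma nst_blk: "nst x \<subseteq> blk x" unfolding nst_def blk_def using sm_eqv by blast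

lemma blk_eq: assumes "y \<in> blk x" "x \<in> X" shows "blk y = blk x"
proof -
  have xy: "eqv x y" "y \<in> X" using assms unfolding blk_def by auto
  show ?thesis unfolding blk_def
    using eqv_trans[of x y] eqv_trans[of y x] eqv_sym[OF xy(1)] xy assms(2) by blast
qed

lemma nst_eq: assumes "y \<in> nst x" "x \<in> X" shows "nst y = nst x"
proof -
  have xy: "sm x y" "y \<in> X" using assms unfolding nst_def by auto
  show ?thesis unfolding nst_def
    using sm_trans[of x y] sm_trans[of y x] sm_sym[OF xy(1)] xy assms(2) by blast
qed

lemma blk_disj: "x \<in> X \<Longrightarrow> y \<in> X \<Longrightarrow> blk x \<noteq> blk y \<Longrightarrow> blk x \<inter> blk y = {}"
  using blk_eq by blast

lemma nst_disj: "x \<in> X \<Longrightarrow> y \<in> X \<Longrightarrow> nst x \<noteq> nst y \<Longrightarrow> nst x \<inter> nst y = {}"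
  using nst_eq by blast

lemma cross_blk: assumes "a \<in> blk u" "z \<in> blk v" "u \<in> X" "v \<in> X" "blk u \<noteq> blk v" shows "\<not> eqv a z"
proof
  assume "eqv a z"
  then have "z \<in> blk a" using assms blk_X unfolding blk_def by blast
  then have "blk z = blk a" using blk_eq assms blk_X by blast
  then show False using blk_eq[OF assms(1,3)] blk_eq[OF assms(2,4)] assms(5) by simp
qed

lemma cross_nst: assumes "a \<in> nst u" "z \<in> nst v" "u \<in> X" "v \<in> X" "nst u \<noteq> nst v" "blk u = blk v"
  shows "bt a z"
proof -
  have aX: "a \<in> X" "z \<in> X" using assms nst_X by blast+
  have "nst a = nst u" "nst z = nst v" using nst_eq assms by blast+
  have "a \<in> blk u" "z \<in> blk v" using assms nst_blk by blast+
  then have "blk a = blk u" "blk z = blk u" using blk_eq assms by auto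
  then have "z \<in> blk a" using blk_self aX by auto
  then have e: "eqv a z" unfolding blk_def by blast
  have "\<not> sm a z"
  proof
    assume "sm a z" then have "z \<in> nst a" unfolding nst_def using aX by blast
    then have "nst z = nst a" using nst_eq aX by blast
    then show False using \<open>nst a = nst u\<close> \<open>nst z = nst v\<close> assms(5) by simp
  qed
  then show ?thesis using eqv_not_sm e by blast
qed


definition gb :: "'a set \<Rightarrow> 'a set" where "gb S = blk (SOME x. x \<in> S)"
definition gn :: "'a set \<Rightarrow> 'a set" where "gn S = nst (SOME x. x \<in> S)"

lemma gb_eq: assumes "S \<noteq> {}" "S \<subseteq> blk y" "y \<in> X" shows "gb S = blk y"
proof -
  have "(SOME x. x \<in> S) \<in> S" using assms(1) by (meson ex_in_conv someI_ex)
  then show ?thesis unfolding gb_def using blk_eq assms by blast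
qed

lemma gn_eq: assumes "S \<noteq> {}" "S \<subseteq> nst y" "y \<in> X" shows "gn S = nst y"
proof -
  have "(SOME x. x \<in> S) \<in> S" using assms(1) by (meson ex_in_conv someI_ex)
  then show ?thesis unfolding gn_def using nst_eq assms by blast
qed

lemma G_coc:
  assumes "S \<union> S' \<union> S'' \<subseteq> X" "S \<noteq> {}" "S' \<noteq> {}" "S'' \<noteq> {}"
    "\<forall>z\<in>S'' - (S \<union> S'). \<forall>a\<in>S \<union> S'. \<forall>b\<in>S \<union> S'. cond a b z"
    "\<forall>z\<in>S - (S' \<union> S''). \<forall>a\<in>S' \<union> S''. \<forall>b\<in>S' \<union> S''. cond a b z"
    "\<forall>z\<in>S' - (S \<union> S''). \<forall>a\<in>S \<union> S''. \<forall>b\<in>S \<union> S''. cond a b z"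
  shows "G S S' * G S' S'' = G S S''"
proof -
  define M where "M = S \<union> S' \<union> S''"
  have 1: "G S S' = Ps M S / Ps M S'"
    by (rule G_eq) (use assms in \<open>auto simp: M_def\<close>)
  have 2: "G S' S'' = Ps M S' / Ps M S''"
    by (rule G_eq) (use assms in \<open>auto simp: M_def\<close>)
  have 3: "G S S'' = Ps M S / Ps M S''"
    by (rule G_eq) (use assms in \<open>auto simp: M_def\<close>)
  have "Ps M S' > 0" by (rule Ps_pos) (use assms in \<open>auto simp: M_def\<close>)
  then show ?thesis unfolding 1 2 3 by simp
qed

lemma G_sym: "S \<noteq> {} \<Longrightarrow> S' \<noteq> {} \<Longrightarrow> S \<union> S' \<subseteq> X \<Longrightarrow> G S S' * G S' S = 1"
proof -
  assume a: "S \<noteq> {}" "S' \<noteq> {}" "S \<union> S' \<subseteq> X"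
  have "Ps (S \<union> S') S > 0" by (rule Ps_pos) (use a in auto)
  moreover have "Ps (S \<union> S') S' > 0" by (rule Ps_pos) (use a in auto)
  ultimately show ?thesis unfolding G_def by (simp add: Un_commute)
qed

end


locale ctx2 = ctx +
  fixes a0 b0 c0
  assumes abc: "a0 \<in> X" "b0 \<in> X" "c0 \<in> X" "\<not> eqv a0 b0" "\<not> eqv b0 c0" "\<not> eqv a0 c0"
    and tri: "\<forall>x\<in>X. \<exists>y\<in>X. \<exists>z\<in>X. bt x y \<and> bt y z \<and> bt x z"
begin

definition w :: "'a set \<Rightarrow> real" where
  "w S = (if S = {} then 0 else if gb S \<noteq> gb (blk a0) then G S (blk a0) else G S (blk b0) * G (blk b0) (blk a0))"

lemma blk_ne: "x \<in> X \<Longrightarrow> y \<in> X \<Longrightarrow> \<not> eqv x y \<Longrightarrow> blk x \<noteq> blk y"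
  using blk_self unfolding blk_def by blast

lemma W: assumes "S \<noteq> {}" "S' \<noteq> {}" "S \<subseteq> blk s" "S' \<subseteq> blk s'" "s \<in> X" "s' \<in> X" "blk s \<noteq> blk s'"
  shows "w S = G S S' * w S'"
proof -
  define D where "D = {S. S \<noteq> {} \<and> (\<exists>s\<in>X. S \<subseteq> blk s)}"
  have gbD: "\<exists>s\<in>X. S \<subseteq> blk s \<and> gb S = blk s" if "S \<in> D" for S
    using that gb_eq unfolding D_def by blast
  have DX: "S \<subseteq> X" if "S \<in> D" for S using that blk_X unfolding D_def by blast
  have DN: "S \<noteq> {}" if "S \<in> D" for S using that unfolding D_def by blast
  have cr: "\<not> eqv a z" if h: "S1 \<in> D" "S2 \<in> D" "gb S1 \<noteq> gb S2" "a \<in> S1" "z \<in> S2" for S1 S2 a z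
  proof -
    obtain s1 where s1: "s1 \<in> X" "S1 \<subseteq> blk s1" "gb S1 = blk s1" using gbD[OF h(1)] by blast
    obtain s2 where s2: "s2 \<in> X" "S2 \<subseteq> blk s2" "gb S2 = blk s2" using gbD[OF h(2)] by blast
    show ?thesis using cross_blk[of a s1 z s2] s1 s2 h(3-5) by blast
  qed
  have coc: "G S1 S2 * G S2 S3 = G S1 S3" if "S1 \<in> D" "S2 \<in> D" "S3 \<in> D" "gb S1 \<noteq> gb S2"
     "gb S2 \<noteq> gb S3" "gb S1 \<noteq> gb S3" for S1 S2 S3
  proof (rule G_coc)
    show "S1 \<union> S2 \<union> S3 \<subseteq> X" using DX that by blast
    show "S1 \<noteq> {}" "S2 \<noteq> {}" "S3 \<noteq> {}" using DN that by blast+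
    show "\<forall>z\<in>S3 - (S1 \<union> S2). \<forall>a\<in>S1 \<union> S2. \<forall>b\<in>S1 \<union> S2. cond a b z"
    proof (intro ballI)
      fix z a b assume z: "z \<in> S3 - (S1 \<union> S2)" "a \<in> S1 \<union> S2" "b \<in> S1 \<union> S2"
      then have "\<not> eqv a z" "\<not> eqv b z" using cr[of S1 S3] cr[of S2 S3] that by auto
      then show "cond a b z" unfolding cond_def by blast
    qed
    show "\<forall>z\<in>S1 - (S2 \<union> S3). \<forall>a\<in>S2 \<union> S3. \<forall>b\<in>S2 \<union> S3. cond a b z"
    proof (intro ballI)
      fix z a b assume z: "z \<in> S1 - (S2 \<union> S3)" "a \<in> S2 \<union> S3" "b \<in> S2 \<union> S3"
      then have "\<not> eqv a z" "\<not> eqv b z" using cr[of S2 S1] cr[of S3 S1] that by auto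
      then show "cond a b z" unfolding cond_def by blast
    qed
    show "\<forall>z\<in>S2 - (S1 \<union> S3). \<forall>a\<in>S1 \<union> S3. \<forall>b\<in>S1 \<union> S3. cond a b z"
    proof (intro ballI)
      fix z a b assume z: "z \<in> S2 - (S1 \<union> S3)" "a \<in> S1 \<union> S3" "b \<in> S1 \<union> S3"
      then have "\<not> eqv a z" "\<not> eqv b z" using cr[of S1 S2] cr[of S3 S2] that by auto
      then show "cond a b z" unfolding cond_def by blast
    qed
  qed
  have sym: "G S1 S2 * G S2 S1 = 1" if "S1 \<in> D" "S2 \<in> D" "gb S1 \<noteq> gb S2" for S1 S2
  proof (rule G_sym)
    show "S1 \<noteq> {}" "S2 \<noteq> {}" using DN that by blast+
    show "S1 \<union> S2 \<subseteq> X" using DX that by blast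
  qed
  have R: "blk a0 \<in> D" "blk b0 \<in> D" "blk c0 \<in> D" using abc blk_self unfolding D_def by blast+
  have gR: "gb (blk a0) = blk a0" "gb (blk b0) = blk b0" "gb (blk c0) = blk c0"
    using gb_eq abc blk_self by blast+
  have gRd: "gb (blk a0) \<noteq> gb (blk b0)" "gb (blk b0) \<noteq> gb (blk c0)" "gb (blk a0) \<noteq> gb (blk c0)"
    unfolding gR using blk_ne[OF abc(1,2,4)] blk_ne[OF abc(2,3,5)] blk_ne[OF abc(1,3,6)] by simp_all
  have SD: "S \<in> D" "S' \<in> D" unfolding D_def using assms(1-6) by blast+
  have "gb S \<noteq> gb S'" using gb_eq[OF assms(1,3,5)] gb_eq[OF assms(2,4,6)] assms(7) by simp
  from ref_lemma[of D gb G, OF coc sym R gRd SD this]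
  show ?thesis unfolding w_def using assms(1,2) by simp
qed


definition refs :: "'a set \<Rightarrow> 'a \<times> 'a \<times> 'a" where
  "refs B = (SOME t. fst t \<in> B \<and> fst (snd t) \<in> B \<and> snd (snd t) \<in> B \<and>
      bt (fst t) (fst (snd t)) \<and> bt (fst (snd t)) (snd (snd t)) \<and> bt (fst t) (snd (snd t)))"

lemma refs_ok: assumes "x \<in> X"
  shows "fst (refs (blk x)) \<in> blk x \<and> fst (snd (refs (blk x))) \<in> blk x \<and> snd (snd (refs (blk x))) \<in> blk x \<and>
      bt (fst (refs (blk x))) (fst (snd (refs (blk x)))) \<and> bt (fst (snd (refs (blk x)))) (snd (snd (refs (blk x))))
      \<and> bt (fst (refs (blk x))) (snd (snd (refs (blk x))))"
proof -
  obtain y z where yz: "y \<in> X" "z \<in> X" "bt x y" "bt y z" "bt x z" using tri assms by blast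
  have "y \<in> blk x" "z \<in> blk x" using yz unfolding blk_def rsimeq_def by blast+
  moreover have "x \<in> blk x" using blk_self assms .
  ultimately have "\<exists>t. fst t \<in> blk x \<and> fst (snd t) \<in> blk x \<and> snd (snd t) \<in> blk x \<and>
      bt (fst t) (fst (snd t)) \<and> bt (fst (snd t)) (snd (snd t)) \<and> bt (fst t) (snd (snd t))"
    using yz by (intro exI[of _ "(x, y, z)"]) simp
  then show ?thesis unfolding refs_def by (rule someI_ex)
qed

definition v :: "'a set \<Rightarrow> real" where
  "v S = (if S = {} then 0 else
     (let r1 = fst (refs (gb S)); r2 = fst (snd (refs (gb S))) in
      if gn S \<noteq> gn (nst r1) then G S (nst r1) else G S (nst r2) * G (nst r2) (nst r1)))"

lemma nst_ne: "x \<in> X \<Longrightarrow> y \<in> X \<Longrightarrow> \<not> sm x y \<Longrightarrow> nst x \<noteq> nst y"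
  using nst_self unfolding nst_def by blast

lemma V: assumes x0: "x0 \<in> X" and "S \<noteq> {}" "S' \<noteq> {}" "S \<subseteq> nst s" "S' \<subseteq> nst s'" "s \<in> blk x0" "s' \<in> blk x0"
    "nst s \<noteq> nst s'"
  shows "v S = G S S' * v S'"
proof -
  define B where "B = blk x0"
  define D where "D = {S. S \<noteq> {} \<and> (\<exists>s\<in>B. S \<subseteq> nst s)}"
  have BX: "B \<subseteq> X" unfolding B_def using blk_X .
  have gnD: "\<exists>s\<in>B. S \<subseteq> nst s \<and> gn S = nst s" if h: "S \<in> D" for S
  proof -
    obtain s where s: "s \<in> B" "S \<subseteq> nst s" "S \<noteq> {}" using h unfolding D_def by blast
    then show ?thesis using gn_eq[OF s(3,2)] BX by blast
  qed
  have gbD: "gb S = B" if h: "S \<in> D" for S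
  proof -
    obtain s where s: "s \<in> B" "S \<subseteq> nst s" "S \<noteq> {}" using h unfolding D_def by blast
    have "S \<subseteq> blk s" using s nst_blk by blast
    then have "gb S = blk s" using gb_eq[OF s(3)] s BX by blast
    also have "blk s = B" unfolding B_def using blk_eq x0 s(1) B_def by blast
    finally show ?thesis .
  qed
  have DX: "S \<subseteq> X" if "S \<in> D" for S using that nst_X unfolding D_def by blast
  have DN: "S \<noteq> {}" if "S \<in> D" for S using that unfolding D_def by blast
  have cr: "bt a z" if h: "S1 \<in> D" "S2 \<in> D" "gn S1 \<noteq> gn S2" "a \<in> S1" "z \<in> S2" for S1 S2 a z
  proof -
    obtain s1 where s1: "s1 \<in> B" "S1 \<subseteq> nst s1" "gn S1 = nst s1" using gnD[OF h(1)] by blast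
    obtain s2 where s2: "s2 \<in> B" "S2 \<subseteq> nst s2" "gn S2 = nst s2" using gnD[OF h(2)] by blast
    have "blk s1 = B" "blk s2 = B" unfolding B_def using blk_eq x0 s1(1) s2(1) B_def by blast+
    moreover have "s1 \<in> X" "s2 \<in> X" using s1 s2 BX by blast+
    ultimately show ?thesis using cross_nst[of a s1 z s2] s1 s2 h(3-5) by auto
  qed
  have coc: "G S1 S2 * G S2 S3 = G S1 S3" if "S1 \<in> D" "S2 \<in> D" "S3 \<in> D" "gn S1 \<noteq> gn S2"
     "gn S2 \<noteq> gn S3" "gn S1 \<noteq> gn S3" for S1 S2 S3
  proof (rule G_coc)
    show "S1 \<union> S2 \<union> S3 \<subseteq> X" using DX that by blast
    show "S1 \<noteq> {}" "S2 \<noteq> {}" "S3 \<noteq> {}" using DN that by blast+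
    show "\<forall>z\<in>S3 - (S1 \<union> S2). \<forall>a\<in>S1 \<union> S2. \<forall>b\<in>S1 \<union> S2. cond a b z"
    proof (intro ballI)
      fix z a b assume z: "z \<in> S3 - (S1 \<union> S2)" "a \<in> S1 \<union> S2" "b \<in> S1 \<union> S2"
      then have "bt a z" "bt b z" using cr[of S1 S3] cr[of S2 S3] that by auto
      then show "cond a b z" unfolding cond_def by blast
    qed
    show "\<forall>z\<in>S1 - (S2 \<union> S3). \<forall>a\<in>S2 \<union> S3. \<forall>b\<in>S2 \<union> S3. cond a b z"
    proof (intro ballI)
      fix z a b assume z: "z \<in> S1 - (S2 \<union> S3)" "a \<in> S2 \<union> S3" "b \<in> S2 \<union> S3"
      then have "bt a z" "bt b z" using cr[of S2 S1] cr[of S3 S1] that by auto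
      then show "cond a b z" unfolding cond_def by blast
    qed
    show "\<forall>z\<in>S2 - (S1 \<union> S3). \<forall>a\<in>S1 \<union> S3. \<forall>b\<in>S1 \<union> S3. cond a b z"
    proof (intro ballI)
      fix z a b assume z: "z \<in> S2 - (S1 \<union> S3)" "a \<in> S1 \<union> S3" "b \<in> S1 \<union> S3"
      then have "bt a z" "bt b z" using cr[of S1 S2] cr[of S3 S2] that by auto
      then show "cond a b z" unfolding cond_def by blast
    qed
  qed
  have sym: "G S1 S2 * G S2 S1 = 1" if "S1 \<in> D" "S2 \<in> D" "gn S1 \<noteq> gn S2" for S1 S2
  proof (rule G_sym)
    show "S1 \<noteq> {}" "S2 \<noteq> {}" using DN that by blast+
    show "S1 \<union> S2 \<subseteq> X" using DX that by blast
  qed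
  define r1 where "r1 = fst (refs B)"
  define r2 where "r2 = fst (snd (refs B))"
  define r3 where "r3 = snd (snd (refs B))"
  have rok: "r1 \<in> B" "r2 \<in> B" "r3 \<in> B" "bt r1 r2" "bt r2 r3" "bt r1 r3"
    using refs_ok[OF x0] unfolding r1_def r2_def r3_def B_def by blast+
  have rX: "r1 \<in> X" "r2 \<in> X" "r3 \<in> X" using rok BX by blast+
  have R: "nst r1 \<in> D" "nst r2 \<in> D" "nst r3 \<in> D" unfolding D_def using rok rX nst_self by blast+
  have gR: "gn (nst r1) = nst r1" "gn (nst r2) = nst r2" "gn (nst r3) = nst r3"
    using gn_eq nst_self rX by blast+
  have gRd: "gn (nst r1) \<noteq> gn (nst r2)" "gn (nst r2) \<noteq> gn (nst r3)" "gn (nst r1) \<noteq> gn (nst r3)"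
    unfolding gR using nst_ne[OF rX(1,2) bt_not_sm[OF rok(4)]] nst_ne[OF rX(2,3) bt_not_sm[OF rok(5)]]
      nst_ne[OF rX(1,3) bt_not_sm[OF rok(6)]] by simp_all
  have SD: "S \<in> D" "S' \<in> D" unfolding D_def B_def using assms(2-7) by blast+
  have sX: "s \<in> X" "s' \<in> X" using assms(6,7) blk_X by blast+
  have "gn S \<noteq> gn S'" using gn_eq[OF assms(2,4) sX(1)] gn_eq[OF assms(3,5) sX(2)] assms(8) by simp
  from ref_lemma[of D gn G, OF coc sym R gRd SD this]
  have "(if gn S \<noteq> gn (nst r1) then G S (nst r1) else G S (nst r2) * G (nst r2) (nst r1)) =
    G S S' * (if gn S' \<noteq> gn (nst r1) then G S' (nst r1) else G S' (nst r2) * G (nst r2) (nst r1))" .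
  moreover have "gb S = B" "gb S' = B" using gbD SD by blast+
  then have "v S = (if gn S \<noteq> gn (nst r1) then G S (nst r1) else G S (nst r2) * G (nst r2) (nst r1))"
    "v S' = (if gn S' \<noteq> gn (nst r1) then G S' (nst r1) else G S' (nst r2) * G (nst r2) (nst r1))"
    unfolding v_def r1_def r2_def Let_def using assms(2,3) by simp_all
  ultimately show ?thesis by (simp only:)
qed

end


context ctx2 begin

definition u :: "'a \<Rightarrow> real" where "u y = p y (nst y)"

lemma w_pos: assumes "S \<noteq> {}" "S \<subseteq> X" shows "w S > 0"
proof -
  have n: "blk a0 \<noteq> {}" "blk b0 \<noteq> {}" using blk_self abc by blast+
  have "G S (blk a0) > 0" by (rule G_pos) (use assms n blk_X in auto)
  moreover have "G S (blk b0) > 0" by (rule G_pos) (use assms n blk_X in auto)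
  moreover have "G (blk b0) (blk a0) > 0" by (rule G_pos) (use assms n blk_X in auto)
  ultimately show ?thesis unfolding w_def using assms(1) by simp
qed

lemma v_pos: assumes "S \<noteq> {}" "S \<subseteq> X" shows "v S > 0"
proof -
  define x where "x = (SOME x. x \<in> S)"
  have x: "x \<in> S" unfolding x_def using assms(1) by (meson ex_in_conv someI_ex)
  then have xX: "x \<in> X" using assms by blast
  have g: "gb S = blk x" unfolding gb_def x_def ..
  define r1 where "r1 = fst (refs (gb S))"
  define r2 where "r2 = fst (snd (refs (gb S)))"
  have "r1 \<in> blk x" "r2 \<in> blk x" using refs_ok[OF xX] unfolding r1_def r2_def g by blast+
  then have rX: "r1 \<in> X" "r2 \<in> X" using blk_X by blast+
  have n: "nst r1 \<noteq> {}" "nst r2 \<noteq> {}" using nst_self rX by blast+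
  have "G S (nst r1) > 0" by (rule G_pos) (use assms n nst_X in auto)
  moreover have "G S (nst r2) > 0" by (rule G_pos) (use assms n nst_X in auto)
  moreover have "G (nst r2) (nst r1) > 0" by (rule G_pos) (use assms n nst_X in auto)
  ultimately show ?thesis unfolding v_def Let_def r1_def[symmetric] r2_def[symmetric] using assms(1) by simp
qed

lemma w_empty: "w {} = 0" unfolding w_def by simp
lemma v_empty: "v {} = 0" unfolding v_def by simp

lemma final: assumes A: "A \<subseteq> X" and x: "x \<in> A"
  shows "p x A = u x / (\<Sum>y\<in>A \<inter> nst x. u y)
     * (v (A \<inter> nst x) / (\<Sum>C'\<in>nst ` blk x. v (A \<inter> C')))
     * (w (A \<inter> blk x) / (\<Sum>B'\<in>blk ` X. w (A \<inter> B')))"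
proof -
  have xX: "x \<in> X" using A x by blast
  define M where "M = A \<inter> blk x"
  define T where "T = A \<inter> nst x"
  have MX: "M \<subseteq> X" "M \<subseteq> A" unfolding M_def using A by auto
  have xM: "x \<in> M" "x \<in> T" unfolding M_def T_def using x blk_self nst_self xX by auto
  have TM: "T \<subseteq> M" unfolding T_def M_def using nst_blk by blast
  have TX: "T \<subseteq> X" using TM MX by blast
  have finX': "finite A" using A finite_subset finX by blast
  have s1: "p x A = Ps A M * p x M"
  proof (rule share)
    show "M \<subseteq> A" "A \<subseteq> X" "M \<noteq> {}" "x \<in> M" using MX A xM by auto
    show "\<forall>z\<in>A - M. \<forall>a\<in>M. \<forall>b\<in>M. cond a b z"
    proof (intro ballI)
      fix z a b assume h: "z \<in> A - M" "a \<in> M" "b \<in> M"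
      have zX: "z \<in> X" using h A by blast
      have ne: "blk x \<noteq> blk z" using h blk_self[OF zX] unfolding M_def by blast
      have "\<not> eqv a z" using cross_blk[of a x z z] h blk_self[OF zX] xX zX ne unfolding M_def by blast
      moreover have "\<not> eqv b z" using cross_blk[of b x z z] h blk_self[OF zX] xX zX ne unfolding M_def by blast
      ultimately show "cond a b z" unfolding cond_def by blast
    qed
  qed
  have s2: "p x M = Ps M T * p x T"
  proof (rule share)
    show "T \<subseteq> M" "M \<subseteq> X" "T \<noteq> {}" "x \<in> T" using TM MX xM by auto
    show "\<forall>z\<in>M - T. \<forall>a\<in>T. \<forall>b\<in>T. cond a b z"
    proof (intro ballI)
      fix z a b assume h: "z \<in> M - T" "a \<in> T" "b \<in> T"
      have zX: "z \<in> X" using h MX by blast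
      have ne: "nst x \<noteq> nst z" using h nst_self[OF zX] unfolding T_def M_def by blast
      have bb: "blk x = blk z" using blk_eq[of z x] h xX unfolding M_def by blast
      have "bt a z" using cross_nst[of a x z z] h nst_self[OF zX] xX zX ne bb unfolding T_def by blast
      moreover have "bt b z" using cross_nst[of b x z z] h nst_self[OF zX] xX zX ne bb unfolding T_def by blast
      ultimately show "cond a b z" unfolding cond_def by blast
    qed
  qed
  have finT: "finite T" using TX finite_subset finX by blast
  have s3: "p x T = u x / (\<Sum>y\<in>T. u y)"
  proof (rule luce[of T x "\<lambda>y. p y T" u])
    show "finite T" "x \<in> T" by (fact finT) (fact xM(2))
    show "p x T > 0" using ppos TX xM by blast
    show "u x > 0" unfolding u_def using ppos nst_X nst_self xX by blast
    show "sum (\<lambda>y. p y T) T = 1" using psum TX xM by blast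
    show "\<forall>j\<in>T. p j T * u x = p x T * u j"
    proof
      fix y assume y: "y \<in> T"
      have yX: "y \<in> X" using y TX by blast
      have syx: "sm y x" using y sm_sym unfolding T_def nst_def by blast
      have ny: "nst y = nst x" using nst_eq[of y x] y xX unfolding T_def by blast
      have yn: "y \<in> nst x" using y unfolding T_def by blast
      have e1: "p y T / p x T = p y {y, x} / p x {y, x}"
        using syx[unfolded rsim_def, rule_format, of T] TX y xM(2) by blast
      have e2: "p y (nst x) / p x (nst x) = p y {y, x} / p x {y, x}"
        using syx[unfolded rsim_def, rule_format, of "nst x"] nst_X yn nst_self[OF xX] by blast
      have pp: "p x T > 0" "p x (nst x) > 0" using ppos[OF TX xM(2)] ppos[OF nst_X nst_self[OF xX]] by auto
      have "p y T / p x T = u y / u x" unfolding u_def ny using e1 e2 by simp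
      then show "p y T * u x = p x T * u y" using pp unfolding u_def by (simp add: field_simps)
    qed
  qed
  have s4: "Ps M T = v T / (\<Sum>C'\<in>nst ` blk x. v (A \<inter> C'))"
  proof (rule luce[of "nst ` blk x" "nst x" "\<lambda>C. Ps M (A \<inter> C)" "\<lambda>C. v (A \<inter> C)", unfolded T_def[symmetric]])
    show "finite (nst ` blk x)" using finite_subset[OF blk_X finX] by blast
    show "nst x \<in> nst ` blk x" using blk_self xX by blast
    show "Ps M T > 0" using Ps_pos TM MX xM by blast
    show "v T > 0" using v_pos TX xM by blast
    show "\<forall>j\<in>nst ` blk x. Ps M (A \<inter> j) * v T = Ps M T * v (A \<inter> j)"
    proof
      fix C assume "C \<in> nst ` blk x"
      then obtain b where b: "b \<in> blk x" "C = nst b" by blast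
      have bX: "b \<in> X" using b blk_X by blast
      show "Ps M (A \<inter> C) * v T = Ps M T * v (A \<inter> C)"
      proof (cases "A \<inter> C = {}")
        case True then show ?thesis unfolding Ps_def by (simp add: v_empty)
      next
        case ne: False
        show ?thesis
        proof (cases "C = nst x")
          case True then show ?thesis unfolding T_def by simp
        next
          case False
          have Cb: "C \<subseteq> blk x" using b nst_blk blk_eq[OF b(1) xX] by blast
          have V1: "v T = G T (A \<inter> C) * v (A \<inter> C)"
            using V[OF xX, of T "A \<inter> C" x b] xM ne b blk_self[OF xX] False unfolding T_def by blast
          have G1: "G T (A \<inter> C) = Ps M T / Ps M (A \<inter> C)"
          proof (rule G_eq)
            show "T \<union> (A \<inter> C) \<subseteq> M" using TM Cb unfolding M_def by blast
            show "M \<subseteq> X" "T \<noteq> {}" "A \<inter> C \<noteq> {}" using MX xM ne by auto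
            show "\<forall>z\<in>M - (T \<union> A \<inter> C). \<forall>a\<in>T \<union> A \<inter> C. \<forall>b\<in>T \<union> A \<inter> C. cond a b z"
            proof (intro ballI)
              fix z a1 b1 assume h: "z \<in> M - (T \<union> A \<inter> C)" "a1 \<in> T \<union> A \<inter> C" "b1 \<in> T \<union> A \<inter> C"
              have zX: "z \<in> X" using h MX by blast
              have zb: "blk z = blk x" using blk_eq[of z x] h xX unfolding M_def by blast
              have bb: "blk b = blk x" using blk_eq[OF b(1) xX] .
              have zA: "z \<in> A" using h MX by blast
              have n1: "nst x \<noteq> nst z" using h zA nst_self[OF zX] unfolding T_def by blast
              have n2: "nst b \<noteq> nst z" using h zA nst_self[OF zX] b by blast
              have "bt c z" if "c \<in> T \<union> A \<inter> C" for c
              proof (cases "c \<in> T")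
                case True then show ?thesis
                  using cross_nst[of c x z z] nst_self[OF zX] xX zX n1 zb unfolding T_def by auto
              next
                case False then have "c \<in> nst b" using that b by blast
                then show ?thesis using cross_nst[of c b z z] nst_self[OF zX] bX zX n2 zb bb by auto
              qed
              then show "cond a1 b1 z" unfolding cond_def using h by blast
            qed
          qed
          have "Ps M (A \<inter> C) > 0" using Ps_pos[of "A \<inter> C" M] ne Cb MX unfolding M_def by blast
          then show ?thesis using V1 G1 by (simp add: field_simps)
        qed
      qed
    qed
    show "(\<Sum>C\<in>nst ` blk x. Ps M (A \<inter> C)) = 1"
    proof -
      have "(\<Sum>C\<in>nst ` blk x. Ps M (A \<inter> C)) = (\<Sum>C\<in>nst ` blk x. \<Sum>y\<in>M \<inter> C. p y M)"
      proof (rule sum.cong[OF refl])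
        fix C assume "C \<in> nst ` blk x"
        then obtain b where b: "b \<in> blk x" "C = nst b" by blast
        then have "C \<subseteq> blk x" using nst_blk blk_eq[OF b(1) xX] by blast
        then have "A \<inter> C = M \<inter> C" unfolding M_def by blast
        then show "Ps M (A \<inter> C) = (\<Sum>y\<in>M \<inter> C. p y M)" unfolding Ps_def by simp
      qed
      also have "\<dots> = (\<Sum>y\<in>M. p y M)"
      proof (rule part_sum)
        show "finite M" using MX finite_subset finX by blast
        show "finite (nst ` blk x)" using finite_subset[OF blk_X finX] by blast
        show "\<forall>y\<in>M. \<exists>!B. B \<in> nst ` blk x \<and> y \<in> B"
        proof
          fix y assume y: "y \<in> M"
          then have yb: "y \<in> blk x" and yX: "y \<in> X" unfolding M_def using blk_X by auto
          show "\<exists>!B. B \<in> nst ` blk x \<and> y \<in> B"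
          proof (rule ex1I[of _ "nst y"])
            show "nst y \<in> nst ` blk x \<and> y \<in> nst y" using yb nst_self[OF yX] by blast
            fix B assume "B \<in> nst ` blk x \<and> y \<in> B"
            then obtain c where c: "c \<in> blk x" "B = nst c" "y \<in> nst c" by blast
            then show "B = nst y" using nst_eq[of y c] blk_X by blast
          qed
        qed
      qed
      also have "\<dots> = 1" using psum MX xM by blast
      finally show ?thesis .
    qed
  qed
  have s5: "Ps A M = w M / (\<Sum>B'\<in>blk ` X. w (A \<inter> B'))"
  proof (rule luce[of "blk ` X" "blk x" "\<lambda>B. Ps A (A \<inter> B)" "\<lambda>B. w (A \<inter> B)", unfolded M_def[symmetric]])
    show "finite (blk ` X)" using finX by blast
    show "blk x \<in> blk ` X" using xX by blast
    show "Ps A M > 0" using Ps_pos MX A xM by blast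
    show "w M > 0" using w_pos MX xM by blast
    show "\<forall>j\<in>blk ` X. Ps A (A \<inter> j) * w M = Ps A M * w (A \<inter> j)"
    proof
      fix B assume "B \<in> blk ` X"
      then obtain b where b: "b \<in> X" "B = blk b" by blast
      show "Ps A (A \<inter> B) * w M = Ps A M * w (A \<inter> B)"
      proof (cases "A \<inter> B = {}")
        case True then show ?thesis unfolding Ps_def by (simp add: w_empty)
      next
        case ne: False
        show ?thesis
        proof (cases "B = blk x")
          case True then show ?thesis unfolding M_def by simp
        next
          case False
          have W1: "w M = G M (A \<inter> B) * w (A \<inter> B)"
            using W[of M "A \<inter> B" x b] xM ne b False xX unfolding M_def by blast
          have G1: "G M (A \<inter> B) = Ps A M / Ps A (A \<inter> B)"
          proof (rule G_eq)
            show "M \<union> (A \<inter> B) \<subseteq> A" using MX by blast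
            show "A \<subseteq> X" "M \<noteq> {}" "A \<inter> B \<noteq> {}" using A xM ne by auto
            show "\<forall>z\<in>A - (M \<union> A \<inter> B). \<forall>a\<in>M \<union> A \<inter> B. \<forall>b\<in>M \<union> A \<inter> B. cond a b z"
            proof (intro ballI)
              fix z a1 b1 assume h: "z \<in> A - (M \<union> A \<inter> B)" "a1 \<in> M \<union> A \<inter> B" "b1 \<in> M \<union> A \<inter> B"
              have zX: "z \<in> X" using h A by blast
              have n1: "blk x \<noteq> blk z" using h blk_self[OF zX] unfolding M_def by blast
              have n2: "blk b \<noteq> blk z" using h blk_self[OF zX] b by blast
              have "\<not> eqv c z" if "c \<in> M \<union> A \<inter> B" for c
              proof (cases "c \<in> M")
                case True then show ?thesis
                  using cross_blk[of c x z z] blk_self[OF zX] xX zX n1 unfolding M_def by auto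
              next
                case False then have "c \<in> blk b" using that b by blast
                then show ?thesis using cross_blk[of c b z z] blk_self[OF zX] b zX n2 by auto
              qed
              then show "cond a1 b1 z" unfolding cond_def using h by blast
            qed
          qed
          have "Ps A (A \<inter> B) > 0" using Ps_pos[of "A \<inter> B" A] ne A by blast
          then show ?thesis using W1 G1 by (simp add: field_simps)
        qed
      qed
    qed
    show "(\<Sum>B\<in>blk ` X. Ps A (A \<inter> B)) = 1"
    proof -
      have "(\<Sum>B\<in>blk ` X. Ps A (A \<inter> B)) = (\<Sum>B\<in>blk ` X. \<Sum>y\<in>A \<inter> B. p y A)"
        unfolding Ps_def ..
      also have "\<dots> = (\<Sum>y\<in>A. p y A)"
      proof (rule part_sum)
        show "finite A" by (fact finX')
        show "finite (blk ` X)" using finX by blast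
        show "\<forall>y\<in>A. \<exists>!B. B \<in> blk ` X \<and> y \<in> B"
        proof
          fix y assume y: "y \<in> A"
          then have yX: "y \<in> X" using A by blast
          show "\<exists>!B. B \<in> blk ` X \<and> y \<in> B"
          proof (rule ex1I[of _ "blk y"])
            show "blk y \<in> blk ` X \<and> y \<in> blk y" using yX blk_self[OF yX] by blast
            fix B assume "B \<in> blk ` X \<and> y \<in> B"
            then obtain c where c: "c \<in> X" "B = blk c" "y \<in> blk c" by blast
            then show "B = blk y" using blk_eq[of y c] by blast
          qed
        qed
      qed
      also have "\<dots> = 1" using psum A x by blast
      finally show ?thesis .
    qed
  qed
  have "p x A = Ps A M * (Ps M T * p x T)" using s1 s2 by simp
  also have "\<dots> = u x / (\<Sum>y\<in>T. u y) * (v T / (\<Sum>C'\<in>nst ` blk x. v (A \<inter> C')))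
     * (w M / (\<Sum>B'\<in>blk ` X. w (A \<inter> B')))" unfolding s3 s4 s5 by (simp add: mult_ac)
  finally show ?thesis unfolding T_def M_def .
qed

end


theorem theorem6:
  fixes X :: "'a set" and p :: "'a \<Rightarrow> 'a set \<Rightarrow> real"
  assumes "finite X"
    and "positive_scf X p"
    and "\<exists>a\<in>X. \<exists>b\<in>X. \<exists>c\<in>X. \<not> rsimeq X p a b \<and> \<not> rsimeq X p b c \<and> \<not> rsimeq X p a c"
    and "\<forall>x\<in>X. \<exists>y\<in>X. \<exists>z\<in>X. rbowtie X p x y \<and> rbowtie X p y z \<and> rbowtie X p x z"
    and "GISA X p"
    and "CRS X p"
  shows "NSC3 X p"
proof -
  obtain a0 b0 c0 where abc: "a0 \<in> X" "b0 \<in> X" "c0 \<in> X" "\<not> rsimeq X p a0 b0" "\<not> rsimeq X p b0 c0" "\<not> rsimeq X p a0 c0"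
    using assms(3) by blast
  interpret ctx2 X p a0 b0 c0
    by (unfold_locales) (use assms abc in auto)
  show ?thesis unfolding NSC3_def
  proof (intro exI conjI)
    show "partition_on X (blk ` X)"
    proof (rule partition_onI)
      show "\<Union> (blk ` X) = X" using blk_X blk_self by blast
      show "\<And>p q. p \<in> blk ` X \<Longrightarrow> q \<in> blk ` X \<Longrightarrow> p \<noteq> q \<Longrightarrow> disjnt p q"
        unfolding disjnt_def using blk_disj by blast
      show "{} \<notin> blk ` X" using blk_self by blast
    qed
    show "\<forall>B\<in>blk ` X. partition_on B (nst ` B)"
    proof
      fix B assume "B \<in> blk ` X"
      then obtain b where b: "b \<in> X" "B = blk b" by blast
      show "partition_on B (nst ` B)"
      proof (rule partition_onI)
        have "nst y \<subseteq> B" if "y \<in> B" for y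
          using that nst_blk[of y] blk_eq[of y b] b by blast
        moreover have "y \<in> nst y" if "y \<in> B" for y using that nst_self b blk_X by blast
        ultimately show "\<Union> (nst ` B) = B" by blast
        show "\<And>p q. p \<in> nst ` B \<Longrightarrow> q \<in> nst ` B \<Longrightarrow> p \<noteq> q \<Longrightarrow> disjnt p q"
          unfolding disjnt_def using nst_disj b blk_X by blast
        show "{} \<notin> nst ` B" using nst_self b blk_X by blast
      qed
    qed
    show "\<forall>x\<in>X. u x > 0" unfolding u_def using ppos nst_X nst_self by blast
    show "\<forall>B\<in>blk ` X. \<forall>S. S \<subseteq> B \<longrightarrow> w S \<ge> 0"
      using w_pos w_empty blk_X by (metis order.refl less_imp_le subset_trans imageE)
    show "w {} = 0" by (fact w_empty)
    show "\<forall>B\<in>blk ` X. \<forall>C\<in>nst ` B. \<forall>S. S \<subseteq> C \<longrightarrow> v S \<ge> 0"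
      using v_pos v_empty nst_X by (metis order.refl less_imp_le subset_trans imageE)
    show "v {} = 0" by (fact v_empty)
    show "\<forall>A. A \<subseteq> X \<and> A \<noteq> {} \<longrightarrow> (\<forall>B\<in>blk ` X. \<forall>C\<in>nst ` B. \<forall>x\<in>A \<inter> C.
             p x A = u x / (\<Sum>y\<in>A \<inter> C. u y)
                   * (v (A \<inter> C) / (\<Sum>C'\<in>nst ` B. v (A \<inter> C')))
                   * (w (A \<inter> B) / (\<Sum>B'\<in>blk ` X. w (A \<inter> B'))))"
    proof (intro allI impI ballI)
      fix A B C x assume A: "A \<subseteq> X \<and> A \<noteq> {}" and B: "B \<in> blk ` X" and C: "C \<in> nst ` B" and x: "x \<in> A \<inter> C"
      obtain b where b: "b \<in> X" "B = blk b" using B by blast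
      obtain c where c: "c \<in> B" "C = nst c" using C by blast
      have cX: "c \<in> X" using c b blk_X by blast
      have xX: "x \<in> X" using x A by blast
      have nx: "nst x = C" using nst_eq[of x c] x c cX by blast
      have "x \<in> blk c" using x c nst_blk by blast
      moreover have "blk c = B" using blk_eq[of c b] c b by blast
      ultimately have bx: "blk x = B" using blk_eq[of x c] cX by blast
      show "p x A = u x / (\<Sum>y\<in>A \<inter> C. u y)
                   * (v (A \<inter> C) / (\<Sum>C'\<in>nst ` B. v (A \<inter> C')))
                   * (w (A \<inter> B) / (\<Sum>B'\<in>blk ` X. w (A \<inter> B')))"
        using final[of A x] A x unfolding nx bx by blast
    qed
  qed
qed


end
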